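(* Let $G$ be a graph with $\mathrm{diam}(G)=3$ such that $D_2(G)$ is connected. Then $\mathrm{diam}(D_2(G))\leqslant 5$.
   Context: All graphs are finite, simple and undirected. For a graph $G$, $\mathrm{d}_G(x,y)$ denotes the length of a shortest path between $x$ and $y$, and $\mathrm{diam}(G)$ is the maximum distance between vertices of $G$. The $2$-distance graph $D_2(G)$ of $G$ is the graph with vertex set $V(G)$ in which two vertices $x,y$ are adjacent if and only if $\mathrm{d}_G(x,y)=2$. *)

theory Defs
  imports Main "HOL-Library.Extended_Nat"
begin

definition simple_graph :: "'a set \<Rightarrow> ('a \<Rightarrow> 'a \<Rightarrow> bool) \<Rightarrow> bool" where
  "simple_graph V E \<longleftrightarrow> finite V \<and> (\<forall>x y. E x y \<longrightarrow> x \<in> V \<and> y \<in> V)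
     \<and> (\<forall>x y. E x y \<longrightarrow> E y x) \<and> (\<forall>x. \<not> E x x)"

fun walk :: "('a \<Rightarrow> 'a \<Rightarrow> bool) \<Rightarrow> 'a list \<Rightarrow> bool" where
  "walk E [] = False"
| "walk E [x] = True"
| "walk E (x # y # xs) = (E x y \<and> walk E (y # xs))"

definition gdist :: "('a \<Rightarrow> 'a \<Rightarrow> bool) \<Rightarrow> 'a \<Rightarrow> 'a \<Rightarrow> enat" where
  "gdist E x y = (if \<exists>p. walk E p \<and> hd p = x \<and> last p = y
     then enat (LEAST n. \<exists>p. walk E p \<and> hd p = x \<and> last p = y \<and> length p = Suc n)
     else \<infinity>)"

definition diam :: "'a set \<Rightarrow> ('a \<Rightarrow> 'a \<Rightarrow> bool) \<Rightarrow> enat" where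
  "diam V E = Sup {gdist E x y | x y. x \<in> V \<and> y \<in> V}"

definition gconnected :: "'a set \<Rightarrow> ('a \<Rightarrow> 'a \<Rightarrow> bool) \<Rightarrow> bool" where
  "gconnected V E \<longleftrightarrow> (\<forall>x\<in>V. \<forall>y\<in>V. gdist E x y \<noteq> \<infinity>)"

definition D2 :: "'a set \<Rightarrow> ('a \<Rightarrow> 'a \<Rightarrow> bool) \<Rightarrow> 'a \<Rightarrow> 'a \<Rightarrow> bool" where
  "D2 V E x y \<longleftrightarrow> x \<in> V \<and> y \<in> V \<and> gdist E x y = 2"

end

theory Submission
  imports Defs
begin

lemma walk_nonempty: "walk R p \<Longrightarrow> p \<noteq> []"
  by (cases p) auto

lemma walk_append:
  "walk R p \<Longrightarrow> walk R q \<Longrightarrow> last p = hd q \<Longrightarrow> walk R (p @ tl q)"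
proof (induction R p rule: walk.induct)
  case (1 E) then show ?case by simp
next
  case (2 E x)
  then show ?case by (cases q) auto
next
  case (3 E x y xs)
  then show ?case by auto
qed

lemma walk_rev: "(\<And>a b. R a b \<Longrightarrow> R b a) \<Longrightarrow> walk R p \<Longrightarrow> walk R (rev p)"
proof (induction R p rule: walk.induct)
  case (1 E) then show ?case by simp
next
  case (2 E x) then show ?case by simp
next
  case (3 E x y xs)
  then have w: "walk E (rev (y # xs))" by simp
  have w2: "walk E [y, x]" using 3 by simp
  have "walk E (rev (y # xs) @ tl [y, x])"
    by (rule walk_append[OF w w2]) simp
  then show ?case by simp
qed

lemma gdist_le:
  assumes "walk R p" "hd p = x" "last p = y"
  shows "gdist R x y \<le> enat (length p - 1)"
proof -
  have ne: "p \<noteq> []" using assms(1) walk_nonempty by blast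
  have ex: "\<exists>p. walk R p \<and> hd p = x \<and> last p = y" using assms by blast
  have "(LEAST n. \<exists>p. walk R p \<and> hd p = x \<and> last p = y \<and> length p = Suc n) \<le> length p - 1"
    by (rule Least_le) (use assms ne in auto)
  then show ?thesis using ex unfolding gdist_def by simp
qed

lemma gdist_obtain:
  assumes "gdist R x y = enat n"
  shows "\<exists>p. walk R p \<and> hd p = x \<and> last p = y \<and> length p = Suc n"
proof -
  have ex: "\<exists>p. walk R p \<and> hd p = x \<and> last p = y"
    using assms unfolding gdist_def by (auto split: if_splits)
  then obtain p where p: "walk R p \<and> hd p = x \<and> last p = y" by blast
  then have ne: "p \<noteq> []" using walk_nonempty by blast
  have ex2: "\<exists>m p. walk R p \<and> hd p = x \<and> last p = y \<and> length p = Suc m"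
    using p ne by (intro exI[of _ "length p - 1"] exI[of _ p]) auto
  have "n = (LEAST n. \<exists>p. walk R p \<and> hd p = x \<and> last p = y \<and> length p = Suc n)"
    using assms ex unfolding gdist_def by simp
  then show ?thesis using LeastI_ex[OF ex2] by simp
qed

lemma gdist_fin:
  assumes "gdist R x y \<noteq> \<infinity>"
  shows "\<exists>n. gdist R x y = enat n"
  using assms by (cases "gdist R x y") auto

lemma gdist_refl: "gdist R x x = 0"
proof -
  have "gdist R x x \<le> enat (length [x] - 1)" by (rule gdist_le) auto
  then show ?thesis by (metis le_zero_eq zero_enat_def diff_Suc_1 length_Cons list.size(3))
qed

lemma gdist_edge: "R x y \<Longrightarrow> gdist R x y \<le> 1"
proof -
  assume "R x y"
  then have "gdist R x y \<le> enat (length [x, y] - 1)" by (intro gdist_le) auto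
  then show ?thesis by (simp add: one_enat_def)
qed

lemma gdist_tri: "gdist R x z \<le> gdist R x y + gdist R y z"
proof (cases "gdist R x y = \<infinity> \<or> gdist R y z = \<infinity>")
  case True then show ?thesis by auto
next
  case False
  then obtain m n where m: "gdist R x y = enat m" and n: "gdist R y z = enat n"
    by (cases "gdist R x y"; cases "gdist R y z") auto
  obtain p where p: "walk R p" "hd p = x" "last p = y" "length p = Suc m"
    using gdist_obtain[OF m] by blast
  obtain q where q: "walk R q" "hd q = y" "last q = z" "length q = Suc n"
    using gdist_obtain[OF n] by blast
  have w: "walk R (p @ tl q)" using walk_append[OF p(1) q(1)] p q by simp
  have hq: "q \<noteq> []" "p \<noteq> []" using p q walk_nonempty by auto
  have "hd (p @ tl q) = x" using p hq by simp
  moreover have "last (p @ tl q) = z"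
  proof (cases "tl q = []")
    case True
    then have "q = [hd q]" using hq by (cases q) auto
    then show ?thesis using p q True by (metis append.right_neutral last.simps)
  next
    case False
    then show ?thesis using q hq by (metis last_appendR last_tl)
  qed
  ultimately have "gdist R x z \<le> enat (length (p @ tl q) - 1)"
    using gdist_le[OF w] by blast
  also have "length (p @ tl q) - 1 = m + n" using p q by simp
  finally show ?thesis using m n by simp
qed

lemma gdist_sym: "(\<And>a b. R a b \<Longrightarrow> R b a) \<Longrightarrow> gdist R x y = gdist R y x"
proof -
  assume s: "\<And>a b. R a b \<Longrightarrow> R b a"
  have *: "gdist R a b \<le> gdist R b a" for a b
  proof (cases "gdist R b a = \<infinity>")
    case True then show ?thesis by simp
  next
    case False
    then obtain n where n: "gdist R b a = enat n" by (cases "gdist R b a") auto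
    obtain p where p: "walk R p" "hd p = b" "last p = a" "length p = Suc n"
      using gdist_obtain[OF n] by blast
    have "walk R (rev p)" using walk_rev s p by blast
    moreover have "p \<noteq> []" using p walk_nonempty by blast
    ultimately have "gdist R a b \<le> enat (length (rev p) - 1)"
      using p by (intro gdist_le) (auto simp: hd_rev last_rev)
    then show ?thesis using n p by simp
  qed
  show ?thesis using *[of x y] *[of y x] by simp
qed

lemma walk_cross:
  "walk R p \<Longrightarrow> P (hd p) \<Longrightarrow> \<not> P (last p) \<Longrightarrow> \<exists>s t. R s t \<and> P s \<and> \<not> P t"
proof (induction R p rule: walk.induct)
  case (1 E) then show ?case by simp
next
  case (2 E x) then show ?case by simp
next
  case (3 E x y xs)
  then show ?case by (cases "P y") auto
qed

lemma gdist_cross: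
  assumes "gdist R x y \<noteq> \<infinity>" "P x" "\<not> P y"
  shows "\<exists>s t. R s t \<and> P s \<and> \<not> P t"
proof -
  obtain n where "gdist R x y = enat n" using assms by (cases "gdist R x y") auto
  then obtain p where "walk R p" "hd p = x" "last p = y" by (meson gdist_obtain)
  then show ?thesis using walk_cross assms by blast
qed


locale G3 =
  fixes V :: "'a set" and E :: "'a \<Rightarrow> 'a \<Rightarrow> bool"
  assumes sg: "simple_graph V E" and dm: "diam V E = 3" and cn: "gconnected V (D2 V E)"
begin

definition d :: "'a \<Rightarrow> 'a \<Rightarrow> nat" where "d x y = the_enat (gdist E x y)"

abbreviation dt :: "'a \<Rightarrow> 'a \<Rightarrow> enat" where "dt x y \<equiv> gdist (D2 V E) x y"

lemma Esym: "E a b \<Longrightarrow> E b a" using sg unfolding simple_graph_def by blast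
lemma EV: "E a b \<Longrightarrow> a \<in> V \<and> b \<in> V" using sg unfolding simple_graph_def by blast
lemma Eirr: "\<not> E a a" using sg unfolding simple_graph_def by blast

lemma gd_le3: "x \<in> V \<Longrightarrow> y \<in> V \<Longrightarrow> gdist E x y \<le> 3"
proof -
  assume "x \<in> V" "y \<in> V"
  then have "gdist E x y \<in> {gdist E x y | x y. x \<in> V \<and> y \<in> V}" by blast
  then have "gdist E x y \<le> diam V E" unfolding diam_def by (rule Sup_upper)
  then show ?thesis using dm by simp
qed

lemma gd: "x \<in> V \<Longrightarrow> y \<in> V \<Longrightarrow> gdist E x y = enat (d x y)"
  using gd_le3[of x y] unfolding d_def by (cases "gdist E x y") auto

lemma d_le3: "x \<in> V \<Longrightarrow> y \<in> V \<Longrightarrow> d x y \<le> 3"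
  using gd_le3[of x y] gd[of x y] by (simp add: numeral_eq_enat)

lemma d_sym: "d x y = d y x"
  unfolding d_def using gdist_sym[of E x y] Esym by metis

lemma d_tri: "x \<in> V \<Longrightarrow> y \<in> V \<Longrightarrow> z \<in> V \<Longrightarrow> d x z \<le> d x y + d y z"
  using gdist_tri[of E x z y] gd[of x z] gd[of x y] gd[of y z] by simp

lemma d_refl: "d x x = 0"
  unfolding d_def using gdist_refl[of E x] by (metis the_enat.simps zero_enat_def)

lemma d0: "x \<in> V \<Longrightarrow> y \<in> V \<Longrightarrow> d x y = 0 \<Longrightarrow> x = y"
proof -
  assume a: "x \<in> V" "y \<in> V" "d x y = 0"
  then have "gdist E x y = enat 0" using gd by simp
  then obtain p where p: "walk E p" "hd p = x" "last p = y" "length p = Suc 0"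
    using gdist_obtain by metis
  then obtain z where "p = [z]" by (cases p) auto
  then show ?thesis using p by simp
qed

lemma d1: "x \<in> V \<Longrightarrow> y \<in> V \<Longrightarrow> d x y = 1 \<longleftrightarrow> E x y"
proof
  assume a: "x \<in> V" "y \<in> V" "d x y = 1"
  then have "gdist E x y = enat 1" using gd by simp
  then obtain p where p: "walk E p" "hd p = x" "last p = y" "length p = Suc 1"
    using gdist_obtain by metis
  then obtain u v where "p = [u, v]"
    by (cases p; cases "tl p") auto
  then show "E x y" using p by simp
next
  assume a: "x \<in> V" "y \<in> V" "E x y"
  then have "gdist E x y \<le> 1" using gdist_edge by metis
  then have "d x y \<le> 1" using gd[OF a(1,2)] by (simp add: one_enat_def)
  moreover have "d x y \<noteq> 0" using d0[OF a(1,2)] a(3) Eirr by blast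
  ultimately show "d x y = 1" by simp
qed

lemma dmid:
  assumes "x \<in> V" "y \<in> V" "d x y = Suc n"
  shows "\<exists>z\<in>V. E x z \<and> d z y = n"
proof -
  have "gdist E x y = enat (Suc n)" using gd assms by simp
  then obtain p where p: "walk E p" "hd p = x" "last p = y" "length p = Suc (Suc n)"
    using gdist_obtain by metis
  then obtain z r where pz: "p = x # z # r" by (cases p; cases "tl p") auto
  have Exz: "E x z" using p pz by simp
  have zV: "z \<in> V" using EV[OF Exz] by blast
  have w: "walk E (z # r)" using p pz by simp
  have "last (z # r) = y" using p pz by simp
  then have "gdist E z y \<le> enat (length (z # r) - 1)" using gdist_le[OF w] by simp
  then have le: "d z y \<le> n" using gd[OF zV assms(2)] p pz by simp
  have "d x z = 1" using d1 assms(1) zV Exz by blast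
  then have "d x y \<le> 1 + d z y" using d_tri[OF assms(1) zV assms(2)] by simp
  then have "n \<le> d z y" using assms(3) by simp
  then show ?thesis using le zV Exz by (intro bexI[of _ z]) auto
qed

lemma D2_iff: "D2 V E x y \<longleftrightarrow> x \<in> V \<and> y \<in> V \<and> d x y = 2"
proof -
  have "x \<in> V \<Longrightarrow> y \<in> V \<Longrightarrow> gdist E x y = 2 \<longleftrightarrow> d x y = 2"
    using gd by (simp add: numeral_eq_enat)
  then show ?thesis unfolding D2_def by blast
qed

lemma dt_edge: "x \<in> V \<Longrightarrow> y \<in> V \<Longrightarrow> d x y = 2 \<Longrightarrow> dt x y \<le> enat 1"
proof -
  assume "x \<in> V" "y \<in> V" "d x y = 2"
  then have "D2 V E x y" using D2_iff by blast
  then have "dt x y \<le> 1" by (rule gdist_edge)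
  then show ?thesis by (simp add: one_enat_def)
qed

lemma dt_tri: "dt x y \<le> enat a \<Longrightarrow> dt y z \<le> enat b \<Longrightarrow> a + b \<le> c \<Longrightarrow> dt x z \<le> enat c"
proof -
  assume h: "dt x y \<le> enat a" "dt y z \<le> enat b" "a + b \<le> c"
  have "dt x z \<le> dt x y + dt y z" by (rule gdist_tri)
  also have "\<dots> \<le> enat a + enat b" by (rule add_mono) (fact h(1), fact h(2))
  also have "\<dots> = enat (a + b)" by simp
  also have "\<dots> \<le> enat c" using h(3) by simp
  finally show ?thesis .
qed

lemma dt_refl: "dt x x \<le> enat 0"
proof -
  have "dt x x = 0" by (rule gdist_refl)
  then show ?thesis by (simp add: zero_enat_def)
qed

lemma D2_sym: "D2 V E a b \<Longrightarrow> D2 V E b a"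
  unfolding D2_iff using d_sym by metis

lemma dt_sym: "dt x y = dt y x"
  by (rule gdist_sym) (rule D2_sym)

lemma cross:
  assumes "x \<in> V" "y \<in> V" "P x" "\<not> P y"
  shows "\<exists>s\<in>V. \<exists>t\<in>V. d s t = 2 \<and> P s \<and> \<not> P t"
proof -
  have "dt x y \<noteq> \<infinity>" using cn assms unfolding gconnected_def by blast
  then obtain s t where "D2 V E s t" "P s" "\<not> P t" using gdist_cross assms by metis
  then show ?thesis using D2_iff by blast
qed

lemma ex3: "\<exists>s\<in>V. \<exists>t\<in>V. d s t = 3"
proof (rule ccontr)
  assume "\<not> ?thesis"
  then have "\<forall>s\<in>V. \<forall>t\<in>V. d s t \<le> 2" using d_le3 by fastforce
  then have "\<forall>g \<in> {gdist E x y | x y. x \<in> V \<and> y \<in> V}. g \<le> 2"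
    using gd by (auto simp: numeral_eq_enat)
  then have "diam V E \<le> 2" unfolding diam_def by (intro Sup_least) blast
  then show False using dm by simp
qed


lemma FA:
  assumes xV: "x \<in> V" and yV: "y \<in> V" and dxy: "d x y = 3"
    and H1: "\<And>z. z \<in> V \<Longrightarrow> \<not> (d x z = 2 \<and> d y z = 2)"
    and wV: "w \<in> V" and xw: "d x w = 1" and yw: "d y w = 3"
  shows "\<exists>p\<in>V. d x p = 2 \<and> d w p = 2"
proof -
  obtain b where bV: "b \<in> V" and yb: "E y b" and bw: "d b w = 2"
    using dmid[OF yV wV, of 2] yw by auto
  obtain q where qV: "q \<in> V" and bq: "E b q" and qw: "d q w = 1"
    using dmid[OF bV wV, of 1] bw by auto
  have yb1: "d y b = 1" using d1 yV bV yb by blast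
  have bq1: "d b q = 1" using d1 bV qV bq by blast
  have t1: "d y q \<le> d y b + d b q" using d_tri yV bV qV by blast
  have t2: "d y w \<le> d y q + d q w" using d_tri yV qV wV by blast
  have yq: "d y q = 2" using t1 t2 yb1 bq1 qw yw by linarith
  have t3: "d x q \<le> d x w + d w q" using d_tri xV wV qV by blast
  have "d w q = 1" using qw d_sym by metis
  then have xq2: "d x q \<le> 2" using t3 xw by linarith
  have "d x q \<noteq> 2" using H1[OF qV] yq by blast
  moreover have "d x q \<noteq> 0"
  proof
    assume "d x q = 0"
    then have "x = q" using d0 xV qV by blast
    then have "d y x = 2" using yq by simp
    then show False using dxy d_sym[of x y] by simp
  qed
  ultimately have xq: "d x q = 1" using xq2 by linarith
  have t4: "d x b \<le> d x q + d q b" using d_tri xV qV bV by blast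
  have t5: "d x y \<le> d x b + d b y" using d_tri xV bV yV by blast
  have "d q b = 1" "d b y = 1" using bq1 yb1 d_sym by metis+
  then have xb: "d x b = 2" using t4 t5 xq dxy by linarith
  have wb: "d w b = 2" using bw d_sym by metis
  show ?thesis using bV xb wb by blast
qed

lemma L3:
  assumes xV: "x \<in> V" and yV: "y \<in> V" and dxy: "d x y = 3"
  shows "dt x y \<le> enat 4"
proof (rule ccontr)
  assume nc: "\<not> dt x y \<le> enat 4"
  have dyx: "d y x = 3" using dxy d_sym by metis
  have H1: "\<not> (d x z = 2 \<and> d y z = 2)" if zV: "z \<in> V" for z
  proof
    assume h: "d x z = 2 \<and> d y z = 2"
    have "dt x z \<le> enat 1" using dt_edge xV zV h by blast
    moreover have "dt z y \<le> enat 1" using dt_edge zV yV h d_sym by metis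
    ultimately have "dt x y \<le> enat 4" using dt_tri by fastforce
    then show False using nc by blast
  qed
  have H1': "\<And>z. z \<in> V \<Longrightarrow> \<not> (d y z = 2 \<and> d x z = 2)" using H1 by blast
  have H2: False if pV: "p \<in> V" and qV: "q \<in> V" and xp: "d x p = 2" and yq: "d y q = 2"
    and pq: "d p q = 2" for p q
  proof -
    have a1: "dt x p \<le> enat 1" using dt_edge xV pV xp by blast
    have a2: "dt p q \<le> enat 1" using dt_edge pV qV pq by blast
    have a3: "dt q y \<le> enat 1" using dt_edge qV yV yq d_sym by metis
    have "dt x q \<le> enat 2" using dt_tri[OF a1 a2] by simp
    then have "dt x y \<le> enat 4" using dt_tri[OF _ a3] by simp
    then show False using nc by blast
  qed
  have H3: False if zV: "z \<in> V" and pV: "p \<in> V" and qV: "q \<in> V" and xp: "d x p = 2"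
    and yq: "d y q = 2" and zp: "d z p = 2" and zq: "d z q = 2" for z p q
  proof -
    have a1: "dt x p \<le> enat 1" using dt_edge xV pV xp by blast
    have a2: "dt p z \<le> enat 1" using dt_edge pV zV zp d_sym by metis
    have a3: "dt z q \<le> enat 1" using dt_edge zV qV zq by blast
    have a4: "dt q y \<le> enat 1" using dt_edge qV yV yq d_sym by metis
    have "dt x z \<le> enat 2" using dt_tri[OF a1 a2] by simp
    then have "dt x q \<le> enat 3" using dt_tri[OF _ a3] by simp
    then have "dt x y \<le> enat 4" using dt_tri[OF _ a4] by simp
    then show False using nc by blast
  qed
  have FA': "\<exists>p\<in>V. d x p = 2 \<and> d w p = 2" if "w \<in> V" "d x w = 1" "d y w = 3" for w
    using FA[OF xV yV dxy H1] that by blast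
  have FB': "\<exists>q\<in>V. d y q = 2 \<and> d w q = 2" if "w \<in> V" "d y w = 1" "d x w = 3" for w
    using FA[OF yV xV dyx H1'] that by blast
  have B33: False if vV: "v \<in> V" and xv: "d x v = 3" and yv: "d y v = 3" for v
  proof -
    obtain a where aV: "a \<in> V" and xa: "E x a" and av: "d a v = 2"
      using dmid[OF xV vV, of 2] xv by auto
    obtain m where mV: "m \<in> V" and am: "E a m" and mv: "d m v = 1"
      using dmid[OF aV vV, of 1] av by auto
    obtain b where bV: "b \<in> V" and yb: "E y b" and bv: "d b v = 2"
      using dmid[OF yV vV, of 2] yv by auto
    obtain m' where m'V: "m' \<in> V" and bm': "E b m'" and m'v: "d m' v = 1"
      using dmid[OF bV vV, of 1] bv by auto
    have xa1: "d x a = 1" "d a x = 1" using d1 xV aV xa d_sym by metis+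
    have am1: "d a m = 1" "d m a = 1" using d1 aV mV am d_sym by metis+
    have yb1: "d y b = 1" "d b y = 1" using d1 yV bV yb d_sym by metis+
    have bm1: "d b m' = 1" "d m' b = 1" using d1 bV m'V bm' d_sym by metis+
    have vm: "d v m = 1" "d v m' = 1" using mv m'v d_sym by metis+
    have "d x m \<le> d x a + d a m" "d x v \<le> d x m + d m v" using d_tri xV aV mV vV by blast+
    then have xm: "d x m = 2" using xa1 am1 xv mv by linarith
    have "d y v \<le> d y m + d m v" using d_tri yV mV vV by blast
    moreover have "d y m \<le> 3" using d_le3 yV mV by blast
    moreover have "d y m \<noteq> 2" using H1[OF mV] xm by blast
    ultimately have ym: "d y m = 3" using yv mv by linarith
    have "d y m' \<le> d y b + d b m'" "d y v \<le> d y m' + d m' v" using d_tri yV bV m'V vV by blast+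
    then have ym': "d y m' = 2" using yb1 bm1 yv m'v by linarith
    have "d x v \<le> d x m' + d m' v" using d_tri xV m'V vV by blast
    moreover have "d x m' \<le> 3" using d_le3 xV m'V by blast
    moreover have "d x m' \<noteq> 2" using H1[OF m'V] ym' by blast
    ultimately have xm': "d x m' = 3" using xv m'v by linarith
    have "d m m' \<le> d m v + d v m'" using d_tri mV vV m'V by blast
    moreover have "d m m' \<noteq> 2" using H2[OF mV m'V xm ym'] by blast
    moreover have "d m m' \<noteq> 0"
    proof
      assume "d m m' = 0"
      then have "m = m'" using d0 mV m'V by blast
      then show False using xm xm' by simp
    qed
    ultimately have mm1: "d m m' = 1" using mv vm by linarith
    then have mm': "d m m' = 1" "d m' m = 1" using d_sym[of m' m] by simp_all
    have "d a m' \<le> d a m + d m m'" "d x m' \<le> d x a + d a m'" using d_tri xV aV mV m'V by blast+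
    then have am': "d a m' = 2" using am1 mm' xa1 xm' by linarith
    have "d b m \<le> d b m' + d m' m" "d y m \<le> d y b + d b m" using d_tri yV bV mV m'V by blast+
    then have bm: "d b m = 2" using bm1 mm' yb1 ym by linarith
    have "d y x \<le> d y a + d a x" using d_tri yV aV xV by blast
    moreover have "d y a \<le> 3" using d_le3 yV aV by blast
    ultimately have ya: "d y a = 2 \<or> d y a = 3" using dyx xa1 by linarith
    have "d x y \<le> d x b + d b y" using d_tri xV bV yV by blast
    moreover have "d x b \<le> 3" using d_le3 xV bV by blast
    ultimately have xb: "d x b = 2 \<or> d x b = 3" using dxy yb1 by linarith
    have va: "d v a = 2" and vb: "d v b = 2" using av bv d_sym by metis+
    show False
    proof (cases "d y a = 3")
      case True
      then obtain p where pV: "p \<in> V" and xp: "d x p = 2" and ap: "d a p = 2"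
        using FA'[OF aV xa1(1)] by blast
      show False using H3[OF aV pV m'V xp ym' ap am'] .
    next
      case False
      then have ya2: "d y a = 2" using ya by blast
      show False
      proof (cases "d x b = 3")
        case True
        then obtain q where qV: "q \<in> V" and yq: "d y q = 2" and bq: "d b q = 2"
          using FB'[OF bV yb1(1)] by blast
        show False using H3[OF bV mV qV xm yq bm bq] .
      next
        case False
        then have "d x b = 2" using xb by blast
        then show False using H3[OF vV bV aV _ ya2 vb va] by blast
      qed
    qed
  qed
  define S where "S z \<longleftrightarrow> d x z = 0 \<or> d x z = 2 \<or> (d x z = 1 \<and> d y z = 3)" for z
  have "S x" using d_refl S_def by simp
  moreover have "\<not> S y" using dxy S_def by simp
  ultimately obtain s t where sV: "s \<in> V" and tV: "t \<in> V" and st: "d s t = 2"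
    and Ss: "S s" and St: "\<not> S t"
    using cross[OF xV yV, of S] by blast
  have ts: "d t s = 2" using st d_sym by metis
  have txs: "d x t \<le> d x s + d s t" "d x s \<le> d x t + d t s" using d_tri xV sV tV by blast+
  have tys: "d y t \<le> d y s + d s t" "d y s \<le> d y t + d t s" using d_tri yV sV tV by blast+
  have rt: "d x y \<le> d x t + d t y" "d x y \<le> d x s + d s y" using d_tri xV sV tV yV by blast+
  have "d t y = d y t" "d s y = d y s" using d_sym by metis+
  note rt = rt[unfolded this]
  have lt: "d x t \<le> 3" "d y t \<le> 3" "d x s \<le> 3" "d y s \<le> 3" using d_le3 xV yV sV tV by blast+
  have nt: "d x t \<noteq> 0" "d x t \<noteq> 2" "\<not> (d x t = 1 \<and> d y t = 3)" using St S_def by auto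
  show False
  proof (cases "d x s = 0")
    case True
    then have "s = x" using d0 xV sV by blast
    then show False using st nt by simp
  next
    case s0: False
    show False
    proof (cases "d x s = 2")
      case xs2: True
      show False
      proof (cases "d x t = 1")
        case True
        then have "d y t = 2" using nt rt lt dxy by linarith
        then show False using H2[OF sV tV xs2 _ st] by blast
      next
        case False
        then have xt3: "d x t = 3" using nt lt by linarith
        consider "d y t = 0" | "d y t = 1" | "d y t = 2" | "d y t = 3" using lt by linarith
        then show False
        proof cases
          case 1
          then have "t = y" using d0 yV tV by blast
          then have "d y s = 2" using ts by simp
          then show False using H1[OF sV] xs2 by blast
        next
          case 2
          then obtain q where qV: "q \<in> V" and yq: "d y q = 2" and tq: "d t q = 2"
            using FB'[OF tV _ xt3] by blast
          show False using H3[OF tV sV qV xs2 yq ts tq] .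
        next
          case 3
          then show False using H2[OF sV tV xs2 _ st] by blast
        next
          case 4
          then show False using B33[OF tV xt3] by blast
        qed
      qed
    next
      case xs2: False
      then have xs1: "d x s = 1" and ys3: "d y s = 3" using Ss s0 S_def by auto
      obtain p where pV: "p \<in> V" and xp: "d x p = 2" and sp: "d s p = 2"
        using FA'[OF sV xs1 ys3] by blast
      have xt: "d x t = 1 \<or> d x t = 3" using nt lt by linarith
      show False
      proof (cases "d x t = 1")
        case True
        then have "d y t = 2" using nt rt lt dxy by linarith
        then show False using H3[OF sV pV tV xp _ sp st] by blast
      next
        case False
        then have xt3: "d x t = 3" using xt by blast
        consider "d y t = 0" | "d y t = 1" | "d y t = 2" | "d y t = 3" using lt by linarith
        then show False
        proof cases
          case 1
          then have "t = y" using d0 yV tV by blast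
          then show False using ts ys3 by simp
        next
          case 2
          obtain m where mV: "m \<in> V" and sm: "E s m" and mt: "d m t = 1"
            using dmid[OF sV tV, of 1] st by auto
          have sm1: "d s m = 1" using d1 sV mV sm by blast
          have "d x m \<le> d x s + d s m" "d x t \<le> d x m + d m t" using d_tri xV sV mV tV by blast+
          then have xm: "d x m = 2" using xs1 sm1 xt3 mt by linarith
          have "d y m \<le> d y t + d t m" "d y s \<le> d y m + d m s" using d_tri yV sV mV tV by blast+
          moreover have "d t m = 1" "d m s = 1" using mt sm1 d_sym by metis+
          ultimately have ym: "d y m = 2" using 2 ys3 by linarith
          show False using H1[OF mV] xm ym by blast
        next
          case 3
          then show False using H3[OF sV pV tV xp _ sp st] by blast
        next
          case 4
          then show False using B33[OF tV xt3] by blast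
        qed
      qed
    qed
  qed
qed


lemma ADJ:
  assumes uV: "u \<in> V" and vV: "v \<in> V" and duv: "d u v = 1"
  shows "dt u v \<le> enat 5"
proof (cases "\<exists>w\<in>V. d u w = 2 \<and> d v w = 2")
  case True
  then obtain w where wV: "w \<in> V" and uw: "d u w = 2" and vw: "d w v = 2" using d_sym by metis
  have "dt u w \<le> enat 1" using dt_edge uV wV uw by blast
  moreover have "dt w v \<le> enat 1" using dt_edge wV vV vw by blast
  ultimately show ?thesis using dt_tri by fastforce
next
  case c2: False
  show ?thesis
  proof (cases "\<exists>w\<in>V. d u w = 2 \<and> d v w = 3")
    case True
    then obtain w where wV: "w \<in> V" and uw: "d u w = 2" and vw: "d w v = 3" using d_sym by metis
    have "dt u w \<le> enat 1" using dt_edge uV wV uw by blast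
    moreover have "dt w v \<le> enat 4" using L3 wV vV vw by blast
    ultimately show ?thesis using dt_tri by fastforce
  next
    case c1: False
    show ?thesis
    proof (cases "\<exists>w\<in>V. d v w = 2 \<and> d u w = 3")
      case True
      then obtain w where wV: "w \<in> V" and vw: "d v w = 2" and uw: "d w u = 3" using d_sym by metis
      have "dt v w \<le> enat 1" using dt_edge vV wV vw by blast
      moreover have "dt w u \<le> enat 4" using L3 wV uV uw by blast
      ultimately have "dt v u \<le> enat 5" using dt_tri by fastforce
      then show ?thesis using dt_sym by metis
    next
      case c1': False
      have dvu: "d v u = 1" using duv d_sym by metis
      have Hu: "d v w = 1" if wV: "w \<in> V" and uw: "d u w = 2" for w
      proof -
        have "d u w \<le> d u v + d v w" using d_tri uV vV wV by blast
        moreover have "d v w \<le> 3" using d_le3 vV wV by blast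
        ultimately show ?thesis using c1 c2 wV uw duv by fastforce
      qed
      have Hv: "d u w = 1" if wV: "w \<in> V" and vw: "d v w = 2" for w
      proof -
        have "d v w \<le> d v u + d u w" using d_tri uV vV wV by blast
        moreover have "d u w \<le> 3" using d_le3 uV wV by blast
        ultimately show ?thesis using c1' c2 wV vw dvu by fastforce
      qed
      have ecc: "d u w \<le> 2" if wV: "w \<in> V" for w
      proof (rule ccontr)
        assume "\<not> d u w \<le> 2"
        then have uw: "d u w = 3" using d_le3 uV wV by fastforce
        then have "d w u = Suc 2" using d_sym by simp
        then obtain q where qV: "q \<in> V" and wq: "E w q" and qu: "d q u = 2"
          using dmid[OF wV uV] by blast
        have "d u q = 2" using qu d_sym by metis
        then have vq: "d v q = 1" using Hu qV by blast
        have wq1: "d q w = 1" using d1 wV qV wq d_sym by metis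
        have "d v w \<le> d v q + d q w" "d u w \<le> d u v + d v w" using d_tri uV vV qV wV by blast+
        then have "d v w = 2" using vq wq1 uw duv by linarith
        then have "d u w = 1" using Hv wV by blast
        then show False using uw by simp
      qed
      have eccv: "d v w \<le> 2" if wV: "w \<in> V" for w
      proof -
        have "d v w \<le> d v u + d u w" using d_tri uV vV wV by blast
        moreover have "d u w \<le> 2" using ecc wV by blast
        moreover have "d u w = 2 \<longrightarrow> d v w = 1" using Hu wV by blast
        ultimately show ?thesis using dvu by linarith
      qed
      have cover: "dt u z \<le> enat 2 \<or> dt v z \<le> enat 2" if zV: "z \<in> V" for z
      proof -
        have r0: "dt u u \<le> enat 0" "dt v v \<le> enat 0" using dt_refl by blast+
        consider "d u z = 0" | "d v z = 0" | "d u z = 2" | "d v z = 2" | "d u z = 1 \<and> d v z = 1"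
          using ecc[OF zV] eccv[OF zV] by linarith
        then show ?thesis
        proof cases
          case 1 then have "z = u" using d0 uV zV by blast
          then show ?thesis using dt_refl by (metis enat_ord_simps(1) le0 order_trans)
        next
          case 2 then have "z = v" using d0 vV zV by blast
          then show ?thesis using dt_refl by (metis enat_ord_simps(1) le0 order_trans)
        next
          case 3 then have "dt u z \<le> enat 1" using dt_edge uV zV by blast
          then show ?thesis by (meson enat_ord_simps(1) one_le_numeral order_trans)
        next
          case 4 then have "dt v z \<le> enat 1" using dt_edge vV zV by blast
          then show ?thesis by (meson enat_ord_simps(1) one_le_numeral order_trans)
        next
          case 5
          show ?thesis
          proof (cases "\<exists>b\<in>V. d u b = 2 \<and> d z b = 2")
            case True
            then obtain b where bV: "b \<in> V" "d u b = 2" "d b z = 2" using d_sym by metis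
            have "dt u b \<le> enat 1" "dt b z \<le> enat 1" using dt_edge uV zV bV by blast+
            then show ?thesis using dt_tri by fastforce
          next
            case nb: False
            show ?thesis
            proof (cases "\<exists>a\<in>V. d v a = 2 \<and> d z a = 2")
              case True
              then obtain a where aV: "a \<in> V" "d v a = 2" "d a z = 2" using d_sym by metis
              have "dt v a \<le> enat 1" "dt a z \<le> enat 1" using dt_edge vV zV aV by blast+
              then show ?thesis using dt_tri by fastforce
            next
              case na: False
              have zb: "d z b = 1" if bV: "b \<in> V" and ub: "d u b = 2" for b
              proof -
                have vb: "d v b = 1" using Hu bV ub by blast
                have "d z b \<le> d z v + d v b" using d_tri zV vV bV by blast
                moreover have "d z v = 1" using 5 d_sym by metis
                moreover have "d z b \<noteq> 0"
                proof
                  assume "d z b = 0"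
                  then have "z = b" using d0 zV bV by blast
                  then show False using 5 ub by simp
                qed
                moreover have "d z b \<noteq> 2" using nb bV ub by blast
                ultimately show ?thesis using vb by linarith
              qed
              have za: "d z a = 1" if aV: "a \<in> V" and va: "d v a = 2" for a
              proof -
                have ua: "d u a = 1" using Hv aV va by blast
                have "d z a \<le> d z u + d u a" using d_tri zV uV aV by blast
                moreover have "d z u = 1" using 5 d_sym by metis
                moreover have "d z a \<noteq> 0"
                proof
                  assume "d z a = 0"
                  then have "z = a" using d0 zV aV by blast
                  then show False using 5 va by simp
                qed
                moreover have "d z a \<noteq> 2" using na aV va by blast
                ultimately show ?thesis using ua by linarith
              qed
              have all2: "d s t \<le> 2" if sV: "s \<in> V" and tV: "t \<in> V" for s t
              proof -
                have s1: "d u s \<le> 1 \<or> d v s \<le> 1" using ecc[OF sV] Hu[OF sV] by fastforce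
                have t1: "d u t \<le> 1 \<or> d v t \<le> 1" using ecc[OF tV] Hu[OF tV] by fastforce
                have tu: "d s t \<le> d s u + d u t" "d s t \<le> d s v + d v t" using d_tri sV tV uV vV by blast+
                have "d s u = d u s" "d s v = d v s" using d_sym by metis+
                note tu = tu[unfolded this]
                have tz: "d s t \<le> d s z + d z t" using d_tri sV tV zV by blast
                have "d s z = d z s" using d_sym by metis
                note tz = tz[unfolded this]
                show ?thesis
                proof (cases "d u s \<le> 1 \<and> d u t \<le> 1")
                  case True then show ?thesis using tu by linarith
                next
                  case F1: False
                  show ?thesis
                  proof (cases "d v s \<le> 1 \<and> d v t \<le> 1")
                    case True then show ?thesis using tu by linarith
                  next
                    case F2: False
                    show ?thesis
                    proof (cases "d u s \<le> 1")
                      case True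
                      then have "d u t > 1" "d v t \<le> 1" using F1 t1 by auto
                      then have ut: "d u t = 2" using ecc[OF tV] by linarith
                      have "d v s > 1" using F2 \<open>d v t \<le> 1\<close> by auto
                      then have vs: "d v s = 2" using eccv[OF sV] by linarith
                      show ?thesis using tz zb[OF tV ut] za[OF sV vs] by linarith
                    next
                      case False
                      then have "d v s \<le> 1" using s1 by auto
                      then have "d v t > 1" using F2 by auto
                      then have "d u t \<le> 1" using t1 by auto
                      have us: "d u s = 2" using ecc[OF sV] False by linarith
                      have vt: "d v t = 2" using eccv[OF tV] \<open>d v t > 1\<close> by linarith
                      show ?thesis using tz zb[OF sV us] za[OF tV vt] by linarith
                    qed
                  qed
                qed
              qed
              obtain s t where "s \<in> V" "t \<in> V" "d s t = 3" using ex3 by blast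
              then show ?thesis using all2 by fastforce
            qed
          qed
        qed
      qed
      show ?thesis
      proof (rule ccontr)
        assume nc: "\<not> dt u v \<le> enat 5"
        define S where "S z \<longleftrightarrow> dt u z \<le> enat 2" for z
        have "S u" using dt_refl S_def by (metis enat_ord_simps(1) le0 order_trans)
        moreover have "\<not> S v"
        proof
          assume "S v"
          then have "dt u v \<le> enat 2" using S_def by blast
          then show False using nc by (meson enat_ord_simps(1) order_trans numeral_le_iff semiring_norm(68) semiring_norm(69) semiring_norm(72) semiring_norm(76))
        qed
        ultimately obtain s t where sV: "s \<in> V" and tV: "t \<in> V" and st: "d s t = 2"
          and Ss: "S s" and St: "\<not> S t"
          using cross[OF uV vV, of S] by blast
        have a1: "dt u s \<le> enat 2" using Ss S_def by blast
        have a2: "dt s t \<le> enat 1" using dt_edge sV tV st by blast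
        have "dt v t \<le> enat 2" using cover[OF tV] St S_def by blast
        then have a3: "dt t v \<le> enat 2" using dt_sym by metis
        have "dt u t \<le> enat 3" using dt_tri[OF a1 a2] by simp
        then have "dt u v \<le> enat 5" using dt_tri[OF _ a3] by simp
        then show False using nc by blast
      qed
    qed
  qed
qed

lemma all_le5:
  assumes xV: "x \<in> V" and yV: "y \<in> V"
  shows "dt x y \<le> enat 5"
proof -
  have r: "dt y y \<le> enat 0" by (rule dt_refl)
  consider "d x y = 0" | "d x y = 1" | "d x y = 2" | "d x y = 3" using d_le3[OF xV yV] by linarith
  then show ?thesis
  proof cases
    case 1 then have "x = y" using d0 xV yV by blast
    then have h: "dt x y \<le> enat 0" using r by simp
    show ?thesis using dt_tri[OF h r] by simp
  next
    case 2 then show ?thesis using ADJ xV yV by blast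
  next
    case 3 then have h: "dt x y \<le> enat 1" using dt_edge xV yV by blast
    show ?thesis using dt_tri[OF h r] by simp
  next
    case 4 then have h: "dt x y \<le> enat 4" using L3 xV yV by blast
    show ?thesis using dt_tri[OF h r] by simp
  qed
qed

end

theorem theorem2p8:
  fixes V :: "'a set" and E :: "'a \<Rightarrow> 'a \<Rightarrow> bool"
  assumes "simple_graph V E"
    and "diam V E = 3"
    and "gconnected V (D2 V E)"
  shows "diam V (D2 V E) \<le> 5"
proof -
  interpret G3 V E using assms by (unfold_locales) auto
  have "g \<le> 5" if gin: "g \<in> {gdist (D2 V E) x y | x y. x \<in> V \<and> y \<in> V}" for g
  proof -
    obtain x y where "x \<in> V" "y \<in> V" "g = gdist (D2 V E) x y" using gin by blast
    then have "g \<le> enat 5" using all_le5 by blast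
    then show ?thesis by (simp add: numeral_eq_enat)
  qed
  then show ?thesis unfolding diam_def by (intro Sup_least) blast
qed

end
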